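(* Let $a\in C^1(\mathbb{R})$ be real valued. For $C>0$ with $a(C^2)>0$ put $\omega=\omega(C)=a(C^2)^2/4$ and $\psi_\omega(x)=Ce^{-\sqrt\omega|x|}$, and write $a=a(C^2)$, $a'=a'(C^2)$. Consider $\int|\psi_\omega|^2dx$ as a function of $\omega$ along this family (locally, near a point with $a'\neq0$, where $C\mapsto\omega(C)$ is locally invertible). Then $$ \partial_\omega\int|\psi_\omega(x)|^2dx<0\quad\text{if } a'\in(-\infty,0)\cup(a/C^2,+\infty), $$ and $$ \partial_\omega\int|\psi_\omega(x)|^2dx>0\quad\text{if } 0<a'<a/C^2. $$ *)

theory Defs
  imports "HOL-Analysis.Analysis"
begin

definition psi :: "real \<Rightarrow> real \<Rightarrow> real \<Rightarrow> real" where
  "psi C \<omega> x = C * exp (- sqrt \<omega> * \<bar>x\<bar>)"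

definition omega :: "(real \<Rightarrow> real) \<Rightarrow> real \<Rightarrow> real" where
  "omega a C = (a (C\<^sup>2))\<^sup>2 / 4"

end

theory Submission imports Defs begin
lemma int_exp_abs:
  fixes k :: real assumes k: "k > 0"
  shows "((\<lambda>x. exp (- k * \<bar>x\<bar>)) has_integral 2 / k) UNIV"
proof -
  have r: "((\<lambda>x::real. exp (-k*x)) has_integral 1/k) {0..}"
    using has_integral_exp_minus_to_infinity[OF k, of 0] by simp
  have r1: "((\<lambda>x. exp (- k * \<bar>x\<bar>)) has_integral 1/k) {0..}"
    by (rule has_integral_spike_finite[OF _ _ r, of "{}"]) auto
  have ai: "(\<lambda>x. exp (- k * \<bar>x\<bar>)) absolutely_integrable_on {0..}"
    using r1 by (intro nonnegative_absolutely_integrable_1) (auto simp: has_integral_integrable)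
  have cv: "(\<lambda>x. \<bar>-1\<bar> * (\<lambda>x. exp (- k * \<bar>x\<bar>)) (uminus x)) absolutely_integrable_on {0..} \<and>
           integral {0..} (\<lambda>x. \<bar>-1\<bar> * (\<lambda>x. exp (- k * \<bar>x\<bar>)) (uminus x)) = 1/k
     \<longleftrightarrow> (\<lambda>x. exp (- k * \<bar>x\<bar>)) absolutely_integrable_on (uminus ` {0..}) \<and>
         integral (uminus ` {0..}) (\<lambda>x. exp (- k * \<bar>x\<bar>)) = 1/k"
    by (rule has_absolute_integral_change_of_variables_1') (auto intro!: derivative_eq_intros)
  have im: "uminus ` {0::real..} = {..0}"
    by (auto simp: image_iff intro!: exI[of _ "- _"])
  have "(\<lambda>x. exp (- k * \<bar>x\<bar>)) absolutely_integrable_on {..0} \<and>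
         integral {..0} (\<lambda>x. exp (- k * \<bar>x\<bar>)) = 1/k"
    using cv ai r1 im by (simp add: integral_unique)
  then have r2: "((\<lambda>x. exp (- k * \<bar>x\<bar>)) has_integral 1/k) {..0}"
    by (metis absolutely_integrable_on_def has_integral_integral)
  have "((\<lambda>x. exp (- k * \<bar>x\<bar>)) has_integral (1/k + 1/k)) ({0..} \<union> {..0})"
  proof (rule has_integral_Un[OF r1 r2])
    have "{0..} \<inter> {..0::real} = {0}" by auto
    then show "negligible ({0..} \<inter> {..0::real})" by simp
  qed
  moreover have "{0..} \<union> {..0::real} = UNIV" by auto
  ultimately show ?thesis by simp
qed

lemma int_psi:
  assumes w: "w > 0"
  shows "integral UNIV (\<lambda>x. \<bar>psi c w x\<bar>\<^sup>2) = c\<^sup>2 / sqrt w"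
proof -
  have k: "2 * sqrt w > 0" using w by simp
  have eq: "\<And>x. \<bar>psi c w x\<bar>\<^sup>2 = c\<^sup>2 * exp (- (2 * sqrt w) * \<bar>x\<bar>)"
    by (simp add: psi_def power_mult_distrib power2_eq_square exp_add[symmetric] algebra_simps)
  have "((\<lambda>x. c\<^sup>2 * exp (- (2 * sqrt w) * \<bar>x\<bar>)) has_integral c\<^sup>2 * (2 / (2 * sqrt w))) UNIV"
    by (rule has_integral_mult_right[OF int_exp_abs[OF k]])
  then have "integral UNIV (\<lambda>x. c\<^sup>2 * exp (- (2 * sqrt w) * \<bar>x\<bar>)) = c\<^sup>2 * (2 / (2 * sqrt w))"
    by (rule integral_unique)
  then show ?thesis unfolding eq using k by simp
qed

lemma s1: fixes A A' C :: real assumes Apos: "A > 0" and Cpos: "C > 0" and h: "A' < 0 \<or> A' > A / C\<^sup>2"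
  shows "4 * (A - C\<^sup>2 * A') / (A^3 * A') < 0"
  using h
proof
  assume "A' < 0"
  moreover have "A^3 > 0" "C\<^sup>2 > 0" using Apos Cpos by auto
  ultimately have "C\<^sup>2 * A' < 0" "A^3 * A' < 0" by (auto simp: mult_pos_neg)
  then have "A - C\<^sup>2 * A' > 0" "A^3 * A' < 0" using Apos by auto
  then show ?thesis by (simp add: divide_pos_neg)
next
  assume h: "A' > A / C\<^sup>2"
  have c2: "C\<^sup>2 > 0" using Cpos by auto
  then have "A' * C\<^sup>2 > A" using h by (simp add: field_simps)
  moreover have "A' > 0" by (rule less_trans[OF divide_pos_pos[OF Apos c2] h])
  moreover have "A^3 > 0" using Apos by auto
  ultimately show ?thesis by (simp add: divide_neg_pos algebra_simps)
qed
lemma s2: fixes A A' C :: real assumes Apos: "A > 0" and Cpos: "C > 0" and h: "0 < A' \<and> A' < A / C\<^sup>2"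
  shows "4 * (A - C\<^sup>2 * A') / (A^3 * A') > 0"
proof -
  have c2: "C\<^sup>2 > 0" using Cpos by auto
  then have "A' * C\<^sup>2 < A" using h by (simp add: field_simps)
  moreover have "A^3 > 0" using Apos by auto
  ultimately show ?thesis using h by (simp add: algebra_simps)
qed
lemma e123: fixes A A' C :: real assumes "A > 0" "A' \<noteq> 0" "C > 0"
  shows "((2 * C * inverse (A * A' * C)) * (A / 2) - C\<^sup>2 * (inverse (A / 2) / 2)) / (A / 2 * (A / 2))
     = 4 * (A - C\<^sup>2 * A') / (A^3 * A')"
proof -
  have e1: "(2 * C * inverse (A * A' * C)) * (A / 2) = 1 / A'"
    using assms by (simp add: field_simps)
  have e2: "C\<^sup>2 * (inverse (A / 2) / 2) = C\<^sup>2 / A"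
    using assms by (simp add: field_simps)
  have e3: "(1 / A' - C\<^sup>2 / A) / (A / 2 * (A / 2)) = 4 * (A - C\<^sup>2 * A') / (A^3 * A')"
    using assms by (simp add: field_simps power3_eq_cube)
  show ?thesis unfolding e1 e2 e3 ..
qed

theorem lemma3p3:
  fixes a a' :: "real \<Rightarrow> real" and C :: real
  assumes deriv: "\<And>x. (a has_real_derivative a' x) (at x)"
    and cont: "continuous_on UNIV a'"
    and Cpos: "C > 0"
    and apos: "a (C\<^sup>2) > 0"
    and a'nz: "a' (C\<^sup>2) \<noteq> 0"
  shows "\<exists>\<epsilon>>0. \<exists>D.
           inj_on (omega a) {C - \<epsilon><..<C + \<epsilon>} \<and>
           ((\<lambda>w. integral UNIV (\<lambda>x. \<bar>psi (the_inv_into {C - \<epsilon><..<C + \<epsilon>} (omega a) w) w x\<bar>\<^sup>2))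
              has_real_derivative D) (at (omega a C)) \<and>
           ((a' (C\<^sup>2) < 0 \<or> a' (C\<^sup>2) > a (C\<^sup>2) / C\<^sup>2) \<longrightarrow> D < 0) \<and>
           ((0 < a' (C\<^sup>2) \<and> a' (C\<^sup>2) < a (C\<^sup>2) / C\<^sup>2) \<longrightarrow> D > 0)"
proof -
  define d where "d z = a (z\<^sup>2) * a' (z\<^sup>2) * z" for z
  have dom: "DERIV (omega a) z :> d z" for z
  proof -
    have "DERIV (\<lambda>z. a (z\<^sup>2)) z :> a' (z\<^sup>2) * (2 * z)"
      by (rule DERIV_chain2[OF deriv]) (auto intro!: derivative_eq_intros)
    then have "DERIV (\<lambda>z. (a (z\<^sup>2))\<^sup>2 / 4) z :> (2 * a (z\<^sup>2) * (a' (z\<^sup>2) * (2 * z))) / 4"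
      by (auto intro!: derivative_eq_intros)
    then show ?thesis unfolding d_def omega_def[abs_def] by (simp add: algebra_simps)
  qed
  have conta: "isCont a x" for x using deriv by (rule DERIV_isCont)
  have conta': "isCont a' x" for x using cont by (simp add: continuous_on_eq_continuous_at)
  have "isCont d C" unfolding d_def[abs_def]
    by (intro continuous_intros continuous_at_compose[of C "\<lambda>z. z\<^sup>2" a, unfolded o_def]
        continuous_at_compose[of C "\<lambda>z. z\<^sup>2" a', unfolded o_def] conta conta')
  moreover have "d C \<noteq> 0" using Cpos apos a'nz by (simp add: d_def)
  ultimately obtain \<epsilon> where ep: "\<epsilon> > 0" and dnz: "\<And>y. dist C y < \<epsilon> \<Longrightarrow> d y \<noteq> 0"
    using continuous_at_avoid[of C d 0] by auto
  define S where "S = {C - \<epsilon><..<C + \<epsilon>}"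
  have contw: "continuous_on T (omega a)" for T
    by (rule continuous_at_imp_continuous_on) (use dom DERIV_isCont in blast)
  have inj: "inj_on (omega a) S"
  proof (rule inj_onI)
    have main: "False" if H: "x \<in> S" "y \<in> S" "x < y" "omega a x = omega a y" for x y
    proof -
      obtain z where z: "x < z" "z < y" "DERIV (omega a) z :> 0"
      proof -
        have "\<And>t. x < t \<Longrightarrow> t < y \<Longrightarrow> omega a differentiable (at t)"
          using dom real_differentiable_def by blast
        then show ?thesis using Rolle[OF H(3,4) contw] that by blast
      qed
      then have "d z = 0" using DERIV_unique[OF dom z(3)] by simp
      moreover have "dist C z < \<epsilon>" using z H unfolding S_def dist_real_def by auto
      ultimately show False using dnz by blast
    qed
    fix x y assume "x \<in> S" "y \<in> S" "omega a x = omega a y"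
    then show "x = y" using main[of x y] main[of y x] by (cases x y rule: linorder_cases) auto
  qed
  define g where "g = the_inv_into S (omega a)"
  have CS: "C \<in> S" using ep by (simp add: S_def)
  have gC: "g (omega a C) = C" unfolding g_def by (rule the_inv_into_f_f[OF inj CS])
  have dg: "DERIV g (omega a C) :> inverse (d C)"
  proof -
    have "(g has_derivative (*) (inverse (d C))) (at (omega a C))"
    proof (rule has_derivative_inverse_strong[of S C "omega a" g "(*) (d C)"])
      show "open S" by (simp add: S_def)
      show "C \<in> S" by (rule CS)
      show "continuous_on S (omega a)" by (rule contw)
      show "\<And>x. x \<in> S \<Longrightarrow> g (omega a x) = x" unfolding g_def by (rule the_inv_into_f_f[OF inj])
      show "(omega a has_derivative (*) (d C)) (at C)" using dom by (simp add: has_field_derivative_def)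
      show "(*) (d C) \<circ> (*) (inverse (d C)) = id" using \<open>d C \<noteq> 0\<close> by (auto simp: fun_eq_iff)
    qed
    then show ?thesis by (simp add: has_field_derivative_def)
  qed
  define A where "A = a (C\<^sup>2)"
  define A' where "A' = a' (C\<^sup>2)"
  have Apos: "A > 0" using apos by (simp add: A_def)
  have A'nz: "A' \<noteq> 0" using a'nz by (simp add: A'_def)
  have w0: "omega a C = A\<^sup>2 / 4" by (simp add: omega_def A_def)
  have sw0: "sqrt (omega a C) = A / 2" using apos
    by (simp add: w0 A_def real_sqrt_divide)
  have w0pos: "omega a C > 0" using apos by (simp add: w0 A_def)
  have "DERIV (\<lambda>w. (g w)\<^sup>2 / sqrt w) (omega a C) :>
     ((2 * g (omega a C) * inverse (d C)) * sqrt (omega a C) - (g (omega a C))\<^sup>2 * (inverse (sqrt (omega a C)) / 2))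
        / (sqrt (omega a C) * sqrt (omega a C))"
  proof (rule DERIV_divide)
    show "DERIV (\<lambda>w. (g w)\<^sup>2) (omega a C) :> 2 * g (omega a C) * inverse (d C)"
      using DERIV_power[OF dg, of 2] by (simp add: mult_ac)
    show "DERIV sqrt (omega a C) :> inverse (sqrt (omega a C)) / 2" by (rule DERIV_real_sqrt[OF w0pos])
    show "sqrt (omega a C) \<noteq> 0" using w0pos by simp
  qed
  also have "((2 * g (omega a C) * inverse (d C)) * sqrt (omega a C) - (g (omega a C))\<^sup>2 * (inverse (sqrt (omega a C)) / 2))
        / (sqrt (omega a C) * sqrt (omega a C)) = 4 * (A - C\<^sup>2 * A') / (A^3 * A')"
    unfolding gC sw0 d_def A_def[symmetric] A'_def[symmetric] by (rule e123[OF Apos A'nz Cpos])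
  finally have dF: "DERIV (\<lambda>w. (g w)\<^sup>2 / sqrt w) (omega a C) :> 4 * (A - C\<^sup>2 * A') / (A^3 * A')" .
  have dF2: "DERIV (\<lambda>w. integral UNIV (\<lambda>x. \<bar>psi (g w) w x\<bar>\<^sup>2)) (omega a C) :> 4 * (A - C\<^sup>2 * A') / (A^3 * A')"
  proof (rule has_field_derivative_transform_within_open[OF dF, of "{0<..}"])
    show "open {0::real<..}" by simp
    show "omega a C \<in> {0<..}" using w0pos by simp
    fix z :: real assume "z \<in> {0<..}"
    then show "(g z)\<^sup>2 / sqrt z = integral UNIV (\<lambda>x. \<bar>psi (g z) z x\<bar>\<^sup>2)"
      using int_psi[of z "g z"] by simp
  qed
  have s1: "4 * (A - C\<^sup>2 * A') / (A^3 * A') < 0" if "A' < 0 \<or> A' > A / C\<^sup>2"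
    by (rule s1[OF Apos Cpos that])
  have s2: "4 * (A - C\<^sup>2 * A') / (A^3 * A') > 0" if "0 < A' \<and> A' < A / C\<^sup>2"
    by (rule s2[OF Apos Cpos that])
  have I: "inj_on (omega a) {C - \<epsilon><..<C + \<epsilon>}" using inj by (simp only: S_def)
  have F: "((\<lambda>w. integral UNIV (\<lambda>x. \<bar>psi (the_inv_into {C - \<epsilon><..<C + \<epsilon>} (omega a) w) w x\<bar>\<^sup>2))
              has_real_derivative (4 * (A - C\<^sup>2 * A') / (A^3 * A'))) (at (omega a C))"
    using dF2 by (simp only: S_def g_def)
  have S1: "(a' (C\<^sup>2) < 0 \<or> a' (C\<^sup>2) > a (C\<^sup>2) / C\<^sup>2) \<longrightarrow> 4 * (A - C\<^sup>2 * A') / (A^3 * A') < 0"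
    using s1 unfolding A_def A'_def by blast
  have S2: "(0 < a' (C\<^sup>2) \<and> a' (C\<^sup>2) < a (C\<^sup>2) / C\<^sup>2) \<longrightarrow> 4 * (A - C\<^sup>2 * A') / (A^3 * A') > 0"
    using s2 unfolding A_def A'_def by blast
  show ?thesis
    apply (rule exI[of _ \<epsilon>])
    apply (rule conjI[OF ep])
    apply (rule exI[of _ "4 * (A - C\<^sup>2 * A') / (A^3 * A')"])
    using I F S1 S2 by (intro conjI)
qed
end
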